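(* Let $k_1,k_2$ be integers with $0<k_1\le 10$ and $0<k_2$, and let $f=f_{k_1,k_2}$. Then $g(f)=k_1$, $r(f)=k_2+1$, and consequently $s(f)=\min\left\{\frac{k_2+1}{2},\,k_1+1\right\}$.
   Context: Throughout, $d=10$ and $\mathbb{Z}_{10}$ is the ring of integers mod $10$. For integers $k_1,k_2>0$ define $f_{k_1,k_2}:\mathbb{Z}_{10}^{10+k_1+k_2}\to\mathbb{Z}_{10}$ by $f_{k_1,k_2}(x_0,\dots,x_{9+k_1+k_2}) = x_j + \sum_{i=10+k_1}^{9+k_1+k_2} x_i \bmod 10$, where $j=\left(\sum_{i=10}^{9+k_1}x_i\right)\bmod 10\in\{0,\dots,9\}$. For a function $f:\mathbb{Z}_d^k\to\mathbb{Z}_d$: the Hamming weight $H(\alpha)$ of $\alpha\in\mathbb{Z}_d^k$ is its number of nonzero coordinates. Fourier basis: $\chi_\alpha(x)=\exp\!\left(-2\pi\sqrt{-1}\,(x\cdot\alpha)/d\right)$ for $\alpha,x\in\mathbb{Z}_d^k$; every $Q:\mathbb{Z}_d^k\to\mathbb{R}$ has a unique expansion $Q=\sum_{\alpha}\hat Q_\alpha\chi_\alpha$. For $j\in\mathbb{Z}_d$ let $Q^{f,j}:\mathbb{Z}_d^k\to\{\pm1\}$, $Q^{f,j}(x)=1$ if $f(x)=j$ and $-1$ otherwise. The distributional complexity of $Q$ is $r(Q)=\min\{H(\alpha): \alpha\neq\vec 0,\ \hat Q_\alpha\neq 0\}$, and $r(f)=\min_{j\in\mathbb{Z}_d} r(Q^{f,j})$.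 Further, $g(f)$ is the least integer $\ell\ge 0$ such that there exist a set $S\subseteq[k]$ of $|S|=\ell$ coordinates, values $\alpha\in\mathbb{Z}_d^{\ell}$ and a modulus $\hat d$ with $2\le\hat d\le d$ such that the restriction $f_{|S,\alpha}:\mathbb{Z}_d^{k-\ell}\to\mathbb{Z}_d$ (fix the coordinates in $S$ to $\alpha$) is a linear function mod $\hat d$, i.e. there are integers $a_i,b$ with $f_{|S,\alpha}(y)\equiv b+\sum_i a_iy_i \pmod{\hat d}$ for all $y$ (elements of $\mathbb{Z}_d$ identified with $\{0,\dots,d-1\}$). Finally $s(f)=\min\{r(f)/2,\,g(f)+1\}$. *)

theory Defs
  imports Complex_Main
begin

text \<open>Throughout, d = 10.  Elements of Z_10^k are lists of length k with entries in {0..9};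
  elements of Z_10 are identified with {0,...,9}.\<close>

definition dd :: nat where "dd = 10"

definition vecs :: "nat \<Rightarrow> nat list set" where
  "vecs k = {xs. length xs = k \<and> set xs \<subseteq> {0..<dd}}"

definition zerovec :: "nat \<Rightarrow> nat list" where
  "zerovec k = replicate k 0"

definition hamming :: "nat list \<Rightarrow> nat" where
  "hamming \<alpha> = card {i. i < length \<alpha> \<and> \<alpha> ! i \<noteq> 0}"

definition dotp :: "nat list \<Rightarrow> nat list \<Rightarrow> nat" where
  "dotp x \<alpha> = (\<Sum>i<length x. x ! i * \<alpha> ! i)"

definition chi :: "nat list \<Rightarrow> nat list \<Rightarrow> complex" where
  "chi \<alpha> x = exp (- (2 * pi * \<i> * of_nat (dotp x \<alpha>)) / of_nat dd)"

definition fourier :: "nat \<Rightarrow> (nat list \<Rightarrow> real) \<Rightarrow> nat list \<Rightarrow> complex" where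
  "fourier k Q = (THE c. (\<forall>\<alpha>. \<alpha> \<notin> vecs k \<longrightarrow> c \<alpha> = 0) \<and>
      (\<forall>x\<in>vecs k. complex_of_real (Q x) = (\<Sum>\<alpha>\<in>vecs k. c \<alpha> * chi \<alpha> x)))"

definition Qfj :: "(nat list \<Rightarrow> nat) \<Rightarrow> nat \<Rightarrow> nat list \<Rightarrow> real" where
  "Qfj f j x = (if f x = j then 1 else -1)"

definition rQ :: "nat \<Rightarrow> (nat list \<Rightarrow> real) \<Rightarrow> nat" where
  "rQ k Q = Min {hamming \<alpha> | \<alpha>. \<alpha> \<in> vecs k \<and> \<alpha> \<noteq> zerovec k \<and> fourier k Q \<alpha> \<noteq> 0}"

definition rf :: "nat \<Rightarrow> (nat list \<Rightarrow> nat) \<Rightarrow> nat" where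
  "rf k f = Min {rQ k (Qfj f j) | j. j < dd}"

text \<open>The restriction to S fixed to alpha is expressed by quantifying over
  all x in Z_d^k agreeing with alpha on S.\<close>
definition gf :: "nat \<Rightarrow> (nat list \<Rightarrow> nat) \<Rightarrow> nat" where
  "gf k f = (LEAST l. \<exists>S (\<alpha>::nat \<Rightarrow> nat) (dh::nat) (a::nat \<Rightarrow> int) (b::int).
      S \<subseteq> {0..<k} \<and> card S = l \<and> (\<forall>i\<in>S. \<alpha> i < dd) \<and> 2 \<le> dh \<and> dh \<le> dd \<and>
      (\<forall>x\<in>vecs k. (\<forall>i\<in>S. x ! i = \<alpha> i) \<longrightarrow>
         int (f x) mod int dh = (b + (\<Sum>i\<in>{0..<k} - S. a i * int (x ! i))) mod int dh))"

definition sf :: "nat \<Rightarrow> (nat list \<Rightarrow> nat) \<Rightarrow> real" where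
  "sf k f = min (real (rf k f) / 2) (real (gf k f) + 1)"

definition fk :: "nat \<Rightarrow> nat \<Rightarrow> nat list \<Rightarrow> nat" where
  "fk k1 k2 x = (let j = (\<Sum>i=10..9+k1. x ! i) mod 10
                 in (x ! j + (\<Sum>i=10+k1..9+k1+k2. x ! i)) mod 10)"

end

theory Submission
  imports Defs "HOL-Analysis.Analysis"
begin


definition w :: complex where "w = exp (- (2 * pi * \<i>) / 10)"

lemma chi_w: "chi \<alpha> x = w ^ dotp x \<alpha>"
proof -
  have "- (2 * pi * \<i> * of_nat (dotp x \<alpha>)) / of_nat dd = of_nat (dotp x \<alpha>) * (- (2 * pi * \<i>) / 10)"
    by (simp add: dd_def)
  then show ?thesis unfolding chi_def w_def by (simp only: exp_of_nat_mult)
qed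

lemma w10: "w ^ 10 = 1"
proof -
  have "w ^ 10 = exp (of_nat 10 * (- (2 * pi * \<i>) / 10))" unfolding w_def by (simp only: exp_of_nat_mult)
  also have "\<dots> = exp (- (2 * pi * \<i>))" by (simp add: mult_ac)
  also have "\<dots> = 1" by (simp add: exp_eq_1) (rule exI[of _ "-1"], simp)
  finally show ?thesis .
qed

lemma w_mod: "w ^ k = w ^ (k mod 10)"
proof -
  have "w ^ k = w ^ (10 * (k div 10) + k mod 10)" by simp
  also have "\<dots> = (w^10) ^ (k div 10) * w ^ (k mod 10)" by (simp only: power_add power_mult)
  finally show ?thesis by (simp add: w10)
qed

lemma w_ne1: assumes "0 < g" "g < (10::nat)" shows "w ^ g \<noteq> 1"
proof
  assume h: "w ^ g = 1"
  have "w ^ g = exp (of_nat g * (- (2 * pi * \<i>) / 10))" unfolding w_def by (simp only: exp_of_nat_mult)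
  with h have "exp (of_nat g * (- (2 * pi * \<i>) / 10)) = 1" by simp
  then obtain n :: int where "Im (of_nat g * (- (2 * pi * \<i>) / 10)) = of_int (2 * n) * pi"
    by (auto simp: exp_eq_1)
  then have "- (2 * pi * real g / 10) = 2 * real_of_int n * pi" by (simp add: mult_ac)
  then have "pi * (- real g) = pi * (10 * real_of_int n)" by (simp add: field_simps)
  then have "- real g = 10 * real_of_int n" using pi_gt_zero mult_left_cancel[of pi "- real g" "10 * real_of_int n"] by linarith
  then have "- int g = 10 * n" by (metis of_int_eq_iff of_int_minus of_int_mult of_int_of_nat_eq of_int_numeral)
  with assms show False by presburger
qed

lemma w_ne0: "w \<noteq> 0" by (simp add: w_def)

lemma geo0: assumes "0 < g" "g < (10::nat)" shows "(\<Sum>a<10. w ^ (a * g)) = 0"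
proof -
  have "(\<Sum>a<10. w ^ (a * g)) = (\<Sum>a<10. (w ^ g) ^ a)" by (simp add: power_mult[symmetric] mult.commute)
  also have "\<dots> = ((w^g)^10 - 1) / (w^g - 1)" using w_ne1[OF assms] by (rule geometric_sum)
  also have "(w^g)^10 = 1" by (metis power_mult power_mult_distrib power_one w10 mult.commute)
  finally show ?thesis by simp
qed

lemma vecs_Suc: "vecs (Suc m) = (\<lambda>(a,xs). a # xs) ` ({..<10} \<times> vecs m)"
  unfolding vecs_def dd_def
  by (auto simp: length_Suc_conv image_iff)

lemma vecs_nth: "x \<in> vecs n \<Longrightarrow> i < n \<Longrightarrow> x ! i < 10"
  unfolding vecs_def dd_def by (auto dest!: nth_mem)

lemma vecs_len: "x \<in> vecs n \<Longrightarrow> length x = n"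
  unfolding vecs_def by auto

lemma finite_vecs: "finite (vecs n)"
proof -
  have "vecs n = {xs. set xs \<subseteq> {0..<dd} \<and> length xs = n}" unfolding vecs_def by auto
  then show ?thesis by (simp add: finite_lists_length_eq)
qed

lemma sum_vecs_Suc: "(\<Sum>x\<in>vecs (Suc m). F x) = (\<Sum>a<10. \<Sum>xs\<in>vecs m. F (a # xs))"
proof -
  have inj: "inj_on (\<lambda>(a,xs). a # xs) ({..<10::nat} \<times> vecs m)" by (auto simp: inj_on_def)
  have "(\<Sum>x\<in>vecs (Suc m). F x) = (\<Sum>p\<in>{..<10} \<times> vecs m. F ((\<lambda>(a,xs). a # xs) p))"
    unfolding vecs_Suc by (rule sum.reindex[OF inj, unfolded comp_def])
  also have "\<dots> = (\<Sum>a<10. \<Sum>xs\<in>vecs m. F (a # xs))"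
    by (simp add: sum.cartesian_product split_def)
  finally show ?thesis .
qed

lemma dotp_Cons: "dotp (a # xs) (g # gs) = a * g + dotp xs gs"
  unfolding dotp_def by (simp only: length_Cons sum.lessThan_Suc_shift) simp

lemma dotp_Nil: "dotp [] gs = 0" unfolding dotp_def by simp

lemma geo: "g < 10 \<Longrightarrow> (\<Sum>a<10. w ^ (a * g)) = (if g = 0 then 10 else 0)"
  using geo0[of g] by auto

lemma ortho0: "\<gamma> \<in> vecs n \<Longrightarrow> (\<Sum>x\<in>vecs n. w ^ dotp x \<gamma>) = (if \<gamma> = zerovec n then 10^n else 0)"
proof (induction \<gamma> arbitrary: n)
  case Nil
  then have "n = 0" by (simp add: vecs_def)
  moreover have "vecs 0 = {[]}" by (auto simp: vecs_def)
  ultimately show ?case by (simp add: dotp_Nil zerovec_def)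
next
  case (Cons g gs)
  then obtain m where n: "n = Suc m" and gs: "gs \<in> vecs m" and g: "g < 10"
    by (auto simp: vecs_def dd_def)
  have "(\<Sum>x\<in>vecs n. w ^ dotp x (g # gs)) = (\<Sum>a<10. \<Sum>xs\<in>vecs m. w ^ (a * g) * w ^ dotp xs gs)"
    unfolding n sum_vecs_Suc by (simp add: dotp_Cons power_add)
  also have "\<dots> = (\<Sum>a<10. w ^ (a * g)) * (\<Sum>xs\<in>vecs m. w ^ dotp xs gs)"
    by (rule sum_product[symmetric])
  also have "\<dots> = (if g # gs = zerovec n then 10^n else 0)"
    using Cons.IH[OF gs] geo[OF g] by (auto simp: n zerovec_def)
  finally show ?case .
qed

lemma cnj_w: "cnj w = w ^ 9"
proof -
  have "cnj w * w = exp (cnj (- (2 * pi * \<i>) / 10) + (- (2 * pi * \<i>) / 10))"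
    unfolding w_def by (simp only: exp_cnj exp_add)
  also have "cnj (- (2 * pi * \<i>) / 10) + (- (2 * pi * \<i>) / 10) = 0" by simp
  finally have "cnj w * w = 1" by simp
  moreover have "w ^ 9 * w = 1" using w10 by (simp add: power_Suc2[symmetric])
  ultimately show ?thesis using w_ne0 by (metis mult_right_cancel)
qed

lemma mod9_eq: "(a + 9*b) mod 10 = (0::nat) \<Longrightarrow> a < 10 \<Longrightarrow> b < (10::nat) \<Longrightarrow> a = b"
proof -
  assume h: "(a + 9*b) mod 10 = (0::nat)" "a < 10" "b < 10"
  have "int a + 9 * int b = 10 * ((int a + 9 * int b) div 10)" using h(1)
    by (metis (no_types, opaque_lifting) mult_div_mod_eq add_0_right of_nat_add of_nat_mult of_nat_numeral zmod_int of_nat_0 )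
  then have k: "int a - int b = 10 * ((int a + 9 * int b) div 10 - int b)" by (simp add: algebra_simps)
  define q where "q = (int a + 9 * int b) div 10 - int b"
  have k2: "int a - int b = 10 * q" using k q_def by simp
  have "int a < 10" "int b < 10" "0 \<le> int a" "0 \<le> int b" using h by auto
  then have "-1 < q \<and> q < 1" using k2 by linarith
  then have "q = 0" by linarith
  then show "a = b" using k2 by simp
qed

definition sub :: "nat list \<Rightarrow> nat list \<Rightarrow> nat list" where
  "sub \<alpha> \<beta> = map (\<lambda>i. (\<alpha>!i + 9*\<beta>!i) mod 10) [0..<length \<alpha>]"

lemma sub_vecs: "\<alpha> \<in> vecs n \<Longrightarrow> sub \<alpha> \<beta> \<in> vecs n"
  by (auto simp: sub_def vecs_def dd_def)

lemma sub_zero: assumes "\<alpha> \<in> vecs n" "\<beta> \<in> vecs n" shows "sub \<alpha> \<beta> = zerovec n \<longleftrightarrow> \<alpha> = \<beta>"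
proof
  assume h: "sub \<alpha> \<beta> = zerovec n"
  show "\<alpha> = \<beta>"
  proof (rule nth_equalityI)
    show "length \<alpha> = length \<beta>" using assms by (simp add: vecs_def)
    fix i assume i: "i < length \<alpha>"
    then have "(\<alpha>!i + 9*\<beta>!i) mod 10 = 0"
      using arg_cong[OF h, of "\<lambda>l. l!i"] assms by (simp add: sub_def zerovec_def vecs_def)
    moreover have "\<alpha>!i < 10" "\<beta>!i < 10" using assms i vecs_len by (metis vecs_nth)+
    ultimately show "\<alpha>!i = \<beta>!i" by (rule mod9_eq)
  qed
next
  assume "\<alpha> = \<beta>"
  then show "sub \<alpha> \<beta> = zerovec n" using assms
    by (auto simp: sub_def zerovec_def vecs_def intro!: nth_equalityI)
qed

lemma dotp_sub: assumes "length \<alpha> = length x"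
  shows "dotp x (sub \<alpha> \<beta>) mod 10 = (dotp x \<alpha> + 9 * dotp x \<beta>) mod 10"
proof -
  have "dotp x (sub \<alpha> \<beta>) mod 10 = (\<Sum>i<length x. x!i * ((\<alpha>!i + 9*\<beta>!i) mod 10) mod 10) mod 10"
    unfolding dotp_def sub_def using assms by (simp add: mod_sum_eq)
  also have "\<dots> = (\<Sum>i<length x. x!i * (\<alpha>!i + 9*\<beta>!i) mod 10) mod 10"
    by (simp add: mod_mult_right_eq)
  also have "\<dots> = (\<Sum>i<length x. x!i * (\<alpha>!i + 9*\<beta>!i)) mod 10"
    by (simp add: mod_sum_eq)
  also have "(\<Sum>i<length x. x!i * (\<alpha>!i + 9*\<beta>!i)) = dotp x \<alpha> + 9 * dotp x \<beta>"
    unfolding dotp_def by (simp add: algebra_simps sum.distrib sum_distrib_left)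
  finally show ?thesis .
qed

lemma chi_mult_cnj: assumes "length \<alpha> = length x"
  shows "chi \<alpha> x * cnj (chi \<beta> x) = chi (sub \<alpha> \<beta>) x"
proof -
  have "chi \<alpha> x * cnj (chi \<beta> x) = w ^ (dotp x \<alpha> + 9 * dotp x \<beta>)"
    by (simp add: chi_w cnj_w power_add power_mult[symmetric] mult.commute)
  also have "\<dots> = w ^ ((dotp x \<alpha> + 9 * dotp x \<beta>) mod 10)" by (rule w_mod)
  also have "\<dots> = w ^ (dotp x (sub \<alpha> \<beta>) mod 10)" by (simp add: dotp_sub[OF assms])
  also have "\<dots> = chi (sub \<alpha> \<beta>) x" by (simp add: chi_w w_mod[symmetric])
  finally show ?thesis .
qed

lemma K: assumes "\<alpha> \<in> vecs n" "\<beta> \<in> vecs n"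
  shows "(\<Sum>x\<in>vecs n. chi \<alpha> x * cnj (chi \<beta> x)) = (if \<alpha> = \<beta> then 10^n else 0)"
proof -
  have "(\<Sum>x\<in>vecs n. chi \<alpha> x * cnj (chi \<beta> x)) = (\<Sum>x\<in>vecs n. w ^ dotp x (sub \<alpha> \<beta>))"
    using assms by (intro sum.cong refl) (simp add: chi_mult_cnj vecs_def, simp add: chi_w)
  also have "\<dots> = (if \<alpha> = \<beta> then 10^n else 0)"
    using ortho0[OF sub_vecs[OF assms(1)]] sub_zero[OF assms] by simp
  finally show ?thesis .
qed

lemma chi_sym: "length \<alpha> = length x \<Longrightarrow> chi \<alpha> x = chi x \<alpha>"
  unfolding chi_def dotp_def by (simp add: mult.commute)

lemma K2: assumes "x \<in> vecs n" "y \<in> vecs n"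
  shows "(\<Sum>\<alpha>\<in>vecs n. chi \<alpha> x * cnj (chi \<alpha> y)) = (if x = y then 10^n else 0)"
proof -
  have "(\<Sum>\<alpha>\<in>vecs n. chi \<alpha> x * cnj (chi \<alpha> y)) = (\<Sum>\<alpha>\<in>vecs n. chi x \<alpha> * cnj (chi y \<alpha>))"
    using assms by (intro sum.cong refl) (simp add: chi_sym vecs_len)
  also have "\<dots> = (if x = y then 10^n else 0)" by (rule K[OF assms])
  finally show ?thesis .
qed

lemma fourier_eq: assumes "\<beta> \<in> vecs n"
  shows "fourier n Q \<beta> = (\<Sum>y\<in>vecs n. of_real (Q y) * cnj (chi \<beta> y)) / 10^n"
proof -
  define c0 where "c0 = (\<lambda>\<alpha>. if \<alpha> \<in> vecs n then (\<Sum>y\<in>vecs n. of_real (Q y) * cnj (chi \<alpha> y)) / 10^n else (0::complex))"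
  let ?P = "\<lambda>c. (\<forall>\<alpha>. \<alpha> \<notin> vecs n \<longrightarrow> c \<alpha> = 0) \<and>
      (\<forall>x\<in>vecs n. complex_of_real (Q x) = (\<Sum>\<alpha>\<in>vecs n. c \<alpha> * chi \<alpha> x))"
  have "?P c0"
  proof (intro conjI allI impI ballI)
    fix \<alpha> assume "\<alpha> \<notin> vecs n" then show "c0 \<alpha> = 0" by (simp add: c0_def)
  next
    fix x assume x: "x \<in> vecs n"
    have "(\<Sum>\<alpha>\<in>vecs n. c0 \<alpha> * chi \<alpha> x) = (\<Sum>\<alpha>\<in>vecs n. \<Sum>y\<in>vecs n. of_real (Q y) * (chi \<alpha> x * cnj (chi \<alpha> y)) / 10^n)"
      by (intro sum.cong refl) (simp add: c0_def sum_divide_distrib sum_distrib_left mult_ac)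
    also have "\<dots> = (\<Sum>y\<in>vecs n. of_real (Q y) * (\<Sum>\<alpha>\<in>vecs n. chi \<alpha> x * cnj (chi \<alpha> y)) / 10^n)"
      by (subst sum.swap) (simp add: sum_divide_distrib sum_distrib_left)
    also have "\<dots> = (\<Sum>y\<in>vecs n. if x = y then of_real (Q y) else 0)"
      using x by (intro sum.cong refl) (simp add: K2)
    also have "\<dots> = of_real (Q x)" using x finite_vecs by simp
    finally show "complex_of_real (Q x) = (\<Sum>\<alpha>\<in>vecs n. c0 \<alpha> * chi \<alpha> x)" by simp
  qed
  moreover have "c = c0" if Pc: "?P c" for c
  proof
    fix \<beta>
    show "c \<beta> = c0 \<beta>"
    proof (cases "\<beta> \<in> vecs n")
      case False then show ?thesis using Pc by (simp add: c0_def)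
    next
      case True
      have "(\<Sum>y\<in>vecs n. of_real (Q y) * cnj (chi \<beta> y)) = (\<Sum>y\<in>vecs n. (\<Sum>\<alpha>\<in>vecs n. c \<alpha> * chi \<alpha> y) * cnj (chi \<beta> y))"
        using Pc by (intro sum.cong refl) simp
      also have "\<dots> = (\<Sum>y\<in>vecs n. \<Sum>\<alpha>\<in>vecs n. c \<alpha> * (chi \<alpha> y * cnj (chi \<beta> y)))"
        by (simp add: sum_distrib_right mult.assoc)
      also have "\<dots> = (\<Sum>\<alpha>\<in>vecs n. \<Sum>y\<in>vecs n. c \<alpha> * (chi \<alpha> y * cnj (chi \<beta> y)))"
        by (rule sum.swap)
      also have "\<dots> = (\<Sum>\<alpha>\<in>vecs n. c \<alpha> * (\<Sum>y\<in>vecs n. chi \<alpha> y * cnj (chi \<beta> y)))"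
        by (simp add: sum_distrib_left)
      also have "\<dots> = (\<Sum>\<alpha>\<in>vecs n. if \<alpha> = \<beta> then c \<alpha> * 10^n else 0)"
        using True by (intro sum.cong refl) (simp add: K)
      also have "\<dots> = c \<beta> * 10^n" using True finite_vecs by simp
      finally show ?thesis using True by (simp add: c0_def)
    qed
  qed
  ultimately have "fourier n Q = c0" unfolding fourier_def by (rule the_equality)
  then show ?thesis using assms by (simp add: c0_def)
qed



definition tr :: "nat list \<Rightarrow> nat list \<Rightarrow> nat list" where
  "tr t x = map (\<lambda>i. (x!i + t!i) mod 10) [0..<length x]"

definition neg :: "nat list \<Rightarrow> nat list" where
  "neg t = map (\<lambda>i. (10 - t!i) mod 10) [0..<length t]"

lemma tr_len[simp]: "length (tr t x) = length x" by (simp add: tr_def)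
lemma tr_nth: "i < length x \<Longrightarrow> tr t x ! i = (x!i + t!i) mod 10" by (simp add: tr_def)
lemma neg_len[simp]: "length (neg t) = length t" by (simp add: neg_def)

lemma tr_vecs: "x \<in> vecs n \<Longrightarrow> tr t x \<in> vecs n"
  by (auto simp: vecs_def tr_def dd_def)

lemma neg_vecs: "t \<in> vecs n \<Longrightarrow> neg t \<in> vecs n"
  by (auto simp: vecs_def neg_def dd_def)

lemma mod_aux: "a < 10 \<Longrightarrow> b < 10 \<Longrightarrow> ((a + b) mod 10 + (10 - b) mod 10) mod 10 = (a::nat)"
proof -
  assume a: "a < 10" and b: "b < 10"
  have "((a + b) mod 10 + (10 - b) mod 10) mod 10 = (a + b + (10 - b)) mod 10"
    by (simp add: mod_add_eq)
  also have "a + b + (10 - b) = a + 10" using b by simp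
  finally show ?thesis using a by simp
qed

lemma tr_inv: assumes "x \<in> vecs n" "t \<in> vecs n" shows "tr (neg t) (tr t x) = x"
proof (rule nth_equalityI)
  show "length (tr (neg t) (tr t x)) = length x" by simp
  fix i assume i: "i < length (tr (neg t) (tr t x))"
  have tl: "length t = length x" using assms vecs_len by metis
  have "x ! i < 10" using assms i vecs_nth vecs_len by (metis tr_len)
  moreover have "t ! i < 10" using assms i vecs_nth vecs_len by (metis tr_len)
  ultimately show "tr (neg t) (tr t x) ! i = x ! i" using i tl mod_aux[of "x!i" "t!i"]
    by (simp add: tr_nth neg_def)
qed

lemma sum_tr: assumes "t \<in> vecs n" shows "(\<Sum>x\<in>vecs n. F (tr t x)) = (\<Sum>x\<in>vecs n. F x)"
proof -
  have inj: "inj_on (tr t) (vecs n)"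
    by (rule inj_on_inverseI[where g = "tr (neg t)"]) (rule tr_inv[OF _ assms])
  have "tr t ` vecs n = vecs n"
    by (rule endo_inj_surj[OF finite_vecs _ inj]) (auto simp: tr_vecs)
  then show ?thesis using sum.reindex[OF inj, of F] by simp
qed

lemma sum_tr_mod: assumes "length x = n" "S \<subseteq> {..<n}"
  shows "(\<Sum>i\<in>S. tr t x ! i) mod 10 = ((\<Sum>i\<in>S. x!i) + (\<Sum>i\<in>S. t!i)) mod 10"
proof -
  have "(\<Sum>i\<in>S. tr t x ! i) = (\<Sum>i\<in>S. (x!i + t!i) mod 10)"
    using assms by (intro sum.cong refl) (auto simp: tr_nth)
  then have "(\<Sum>i\<in>S. tr t x ! i) mod 10 = (\<Sum>i\<in>S. x!i + t!i) mod 10"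
    by (simp add: mod_sum_eq)
  then show ?thesis by (simp add: sum.distrib)
qed

lemma dotp_tr: assumes "length t = length x"
  shows "dotp (tr t x) \<alpha> mod 10 = (dotp x \<alpha> + dotp t \<alpha>) mod 10"
proof -
  have "dotp (tr t x) \<alpha> mod 10 = (\<Sum>i<length x. (x!i + t!i) mod 10 * \<alpha>!i mod 10) mod 10"
    unfolding dotp_def by (simp add: tr_nth mod_sum_eq)
  also have "\<dots> = (\<Sum>i<length x. (x!i + t!i) * \<alpha>!i mod 10) mod 10"
    by (simp add: mod_mult_left_eq)
  also have "\<dots> = (\<Sum>i<length x. (x!i + t!i) * \<alpha>!i) mod 10"
    by (simp add: mod_sum_eq)
  also have "(\<Sum>i<length x. (x!i + t!i) * \<alpha>!i) = dotp x \<alpha> + dotp t \<alpha>"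
    unfolding dotp_def using assms by (simp add: algebra_simps sum.distrib)
  finally show ?thesis .
qed

lemma w_dotp_tr: assumes "length t = length x"
  shows "w ^ dotp (tr t x) \<alpha> = w ^ dotp x \<alpha> * w ^ dotp t \<alpha>"
proof -
  have "w ^ dotp (tr t x) \<alpha> = w ^ (dotp (tr t x) \<alpha> mod 10)" by (rule w_mod)
  also have "\<dots> = w ^ ((dotp x \<alpha> + dotp t \<alpha>) mod 10)" by (simp only: dotp_tr[OF assms])
  also have "\<dots> = w ^ (dotp x \<alpha> + dotp t \<alpha>)" by (rule w_mod[symmetric])
  finally show ?thesis by (simp add: power_add)
qed

definition J :: "nat \<Rightarrow> nat list \<Rightarrow> nat" where
  "J k1 x = (\<Sum>i=10..9+k1. x!i) mod 10"

lemma fk_alt: "fk k1 k2 x = (x ! J k1 x + (\<Sum>i=10+k1..9+k1+k2. x!i)) mod 10"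
  by (simp add: fk_def J_def Let_def)

lemma J_lt: "J k1 x < 10" by (simp add: J_def)
lemma fk_lt: "fk k1 k2 x < 10" by (simp add: fk_alt)

lemma J_tr: assumes "length x = 10 + k1 + k2" "\<forall>i\<in>{10..9+k1}. t!i = 0"
  shows "J k1 (tr t x) = J k1 x"
proof -
  have "J k1 (tr t x) = ((\<Sum>i=10..9+k1. x!i) + (\<Sum>i=10..9+k1. t!i)) mod 10"
    unfolding J_def by (rule sum_tr_mod[OF assms(1)]) auto
  also have "(\<Sum>i=10..9+k1. t!i) = 0" using assms(2) by simp
  finally show ?thesis by (simp add: J_def)
qed

lemma fk_tr: assumes "length x = 10 + k1 + k2" "\<forall>i\<in>{10..9+k1}. t!i = 0"
  shows "fk k1 k2 (tr t x) = (fk k1 k2 x + t ! J k1 x + (\<Sum>i=10+k1..9+k1+k2. t!i)) mod 10"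
proof -
  have Jl: "J k1 x < length x" using J_lt[of k1 x] assms(1) by simp
  have b: "(\<Sum>i=10+k1..9+k1+k2. tr t x!i) mod 10 = ((\<Sum>i=10+k1..9+k1+k2. x!i) + (\<Sum>i=10+k1..9+k1+k2. t!i)) mod 10"
    by (rule sum_tr_mod[OF assms(1)]) auto
  have "fk k1 k2 (tr t x) = ((x ! J k1 x + t ! J k1 x) mod 10 + (\<Sum>i=10+k1..9+k1+k2. tr t x!i)) mod 10"
    unfolding fk_alt J_tr[OF assms] using Jl by (simp add: tr_nth)
  also have "\<dots> = (x ! J k1 x + t ! J k1 x + (\<Sum>i=10+k1..9+k1+k2. tr t x!i) mod 10) mod 10"
    by (simp only: mod_add_left_eq mod_add_right_eq)
  also have "\<dots> = (x ! J k1 x + t ! J k1 x + ((\<Sum>i=10+k1..9+k1+k2. x!i) + (\<Sum>i=10+k1..9+k1+k2. t!i))) mod 10"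
    unfolding b by (simp add: mod_add_right_eq)
  also have "\<dots> = (x ! J k1 x + (\<Sum>i=10+k1..9+k1+k2. x!i) + (t ! J k1 x + (\<Sum>i=10+k1..9+k1+k2. t!i))) mod 10"
    by (simp add: add_ac)
  also have "\<dots> = ((x ! J k1 x + (\<Sum>i=10+k1..9+k1+k2. x!i)) mod 10 + (t ! J k1 x + (\<Sum>i=10+k1..9+k1+k2. t!i))) mod 10"
    by (rule mod_add_left_eq[symmetric])
  finally show ?thesis by (simp add: fk_alt add.assoc)
qed



definition Ssum :: "nat \<Rightarrow> nat \<Rightarrow> nat list \<Rightarrow> nat \<Rightarrow> complex" where
  "Ssum k1 k2 \<alpha> j = (\<Sum>x\<in>vecs (10+k1+k2). if fk k1 k2 x = j then w ^ dotp x \<alpha> else 0)"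

lemma Ssum_total: "(\<Sum>j<10. Ssum k1 k2 \<alpha> j) = (\<Sum>x\<in>vecs (10+k1+k2). w ^ dotp x \<alpha>)"
proof -
  have "(\<Sum>j<10. Ssum k1 k2 \<alpha> j) = (\<Sum>x\<in>vecs (10+k1+k2). \<Sum>j<10. if fk k1 k2 x = j then w ^ dotp x \<alpha> else 0)"
    unfolding Ssum_def by (rule sum.swap)
  also have "\<dots> = (\<Sum>x\<in>vecs (10+k1+k2). w ^ dotp x \<alpha>)"
    by (intro sum.cong refl) (simp add: fk_lt)
  finally show ?thesis .
qed

lemma Ssum_shift:
  assumes t: "t \<in> vecs (10+k1+k2)" and sel: "\<forall>i\<in>{10..9+k1}. t!i = 0"
  shows "Ssum k1 k2 \<alpha> j = (\<Sum>x\<in>vecs (10+k1+k2).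
     if (fk k1 k2 x + t ! J k1 x + (\<Sum>i=10+k1..9+k1+k2. t!i)) mod 10 = j then w ^ dotp x \<alpha> * w ^ dotp t \<alpha> else 0)"
proof -
  have "Ssum k1 k2 \<alpha> j = (\<Sum>x\<in>vecs (10+k1+k2). if fk k1 k2 (tr t x) = j then w ^ dotp (tr t x) \<alpha> else 0)"
    unfolding Ssum_def by (rule sum_tr[OF t, symmetric])
  also have "\<dots> = (\<Sum>x\<in>vecs (10+k1+k2).
     if (fk k1 k2 x + t ! J k1 x + (\<Sum>i=10+k1..9+k1+k2. t!i)) mod 10 = j then w ^ dotp x \<alpha> * w ^ dotp t \<alpha> else 0)"
  proof (intro sum.cong refl)
    fix x assume x: "x \<in> vecs (10+k1+k2)"
    have lx: "length x = 10+k1+k2" using x vecs_len by blast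
    have lt: "length t = length x" using t x vecs_len by metis
    show "(if fk k1 k2 (tr t x) = j then w ^ dotp (tr t x) \<alpha> else 0) =
      (if (fk k1 k2 x + t ! J k1 x + (\<Sum>i=10+k1..9+k1+k2. t!i)) mod 10 = j then w ^ dotp x \<alpha> * w ^ dotp t \<alpha> else 0)"
      using fk_tr[OF lx sel] w_dotp_tr[OF lt] by simp
  qed
  finally show ?thesis .
qed

lemma mod_shift_eq: "f < 10 \<Longrightarrow> j < 10 \<Longrightarrow> ((f + j) mod 10 = j) = (f = (0::nat))"
proof -
  assume f: "f < 10" and j: "j < 10"
  show ?thesis
  proof (cases "f + j < 10")
    case True then show ?thesis by simp
  next
    case False
    then have "(f + j) mod 10 = (f + j - 10) mod 10" by (simp add: le_mod_geq)
    also have "\<dots> = f + j - 10" using f j by simp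
    finally show ?thesis using f j False by simp
  qed
qed

lemma caseA:
  assumes \<alpha>: "\<alpha> \<in> vecs (10+k1+k2)" "\<alpha> \<noteq> zerovec (10+k1+k2)"
    and i0: "i0 \<in> {10+k1..9+k1+k2}" "\<alpha> ! i0 = 0" and j: "j < 10"
  shows "Ssum k1 k2 \<alpha> j = 0"
proof -
  let ?n = "10+k1+k2"
  define ta where "ta a = map (\<lambda>i. if i = i0 then a else (0::nat)) [0..<?n]" for a
  have eq: "Ssum k1 k2 \<alpha> j' = Ssum k1 k2 \<alpha> 0" if j': "j' < 10" for j'
  proof -
    have tv: "ta j' \<in> vecs ?n" using j' by (auto simp: ta_def vecs_def dd_def)
    have sel: "\<forall>i\<in>{10..9+k1}. ta j' ! i = 0" using i0 by (auto simp: ta_def nth_append)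
    have tJ: "ta j' ! J k1 x = 0" for x using i0 J_lt[of k1 x] by (auto simp: ta_def)
    have tb: "(\<Sum>i=10+k1..9+k1+k2. ta j' ! i) = j'"
    proof -
      have "(\<Sum>i=10+k1..9+k1+k2. ta j' ! i) = (\<Sum>i=10+k1..9+k1+k2. if i = i0 then j' else 0)"
        by (intro sum.cong refl) (auto simp: ta_def)
      also have "\<dots> = j'" using i0 by simp
      finally show ?thesis .
    qed
    have td: "dotp (ta j') \<alpha> = 0"
      unfolding dotp_def using i0 by (intro sum.neutral) (auto simp: ta_def)
    have "Ssum k1 k2 \<alpha> j' = (\<Sum>x\<in>vecs ?n. if (fk k1 k2 x + j') mod 10 = j' then w ^ dotp x \<alpha> else 0)"
      unfolding Ssum_shift[OF tv sel] tJ tb td by (simp only: power_0 mult_1_right add_0_right)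
    also have "\<dots> = Ssum k1 k2 \<alpha> 0"
      unfolding Ssum_def using mod_shift_eq[OF fk_lt j'] by simp
    finally show ?thesis .
  qed
  have "(\<Sum>j<10. Ssum k1 k2 \<alpha> j) = (\<Sum>x\<in>vecs (10+k1+k2). w ^ dotp x \<alpha>)" by (rule Ssum_total)
  also have "\<dots> = 0" using ortho0[OF \<alpha>(1)] \<alpha>(2) by (simp only: if_False)
  finally have s0: "(\<Sum>j<10. Ssum k1 k2 \<alpha> j) = 0" .
  have "(\<Sum>j<10. Ssum k1 k2 \<alpha> j) = (\<Sum>j<(10::nat). Ssum k1 k2 \<alpha> 0)"
    by (rule sum.cong[OF refl], rule eq, simp)
  also have "\<dots> = 10 * Ssum k1 k2 \<alpha> 0" by (simp only: sum_constant card_lessThan) simp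
  finally have "(\<Sum>j<10. Ssum k1 k2 \<alpha> j) = 10 * Ssum k1 k2 \<alpha> 0" .
  with s0 have "10 * Ssum k1 k2 \<alpha> 0 = 0" by simp
  then have "Ssum k1 k2 \<alpha> 0 = 0" by simp
  then show ?thesis using eq[OF j] by simp
qed

lemma caseB:
  assumes \<alpha>: "\<alpha> \<in> vecs (10+k1+k2)" and k2: "0 < k2"
    and off: "\<forall>i<10+k1+k2. i \<notin> {10+k1..9+k1+k2} \<longrightarrow> \<alpha> ! i = 0"
    and nz: "\<alpha> ! (10+k1) \<noteq> 0"
  shows "Ssum k1 k2 \<alpha> j = 0"
proof -
  let ?n = "10+k1+k2"
  let ?i0 = "10+k1"
  define t where "t = map (\<lambda>i. if i < 10 then 9 else if i = ?i0 then 1 else (0::nat)) [0..<?n]"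
  have tv: "t \<in> vecs ?n" by (auto simp: t_def vecs_def dd_def)
  have sel: "\<forall>i\<in>{10..9+k1}. t ! i = 0" by (auto simp: t_def)
  have tJ: "t ! J k1 x = 9" for x using J_lt[of k1 x] by (auto simp: t_def)
  have tb: "(\<Sum>i=10+k1..9+k1+k2. t ! i) = 1"
  proof -
    have "(\<Sum>i=10+k1..9+k1+k2. t ! i) = (\<Sum>i=10+k1..9+k1+k2. if i = ?i0 then 1 else 0)"
      by (intro sum.cong refl) (auto simp: t_def)
    also have "\<dots> = 1" using k2 by simp
    finally show ?thesis .
  qed
  have a_lt: "\<alpha> ! ?i0 < 10" using \<alpha> k2 vecs_nth by simp
  have td: "dotp t \<alpha> = \<alpha> ! ?i0"
  proof -
    have "dotp t \<alpha> = (\<Sum>i<?n. if i = ?i0 then \<alpha> ! ?i0 else 0)"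
      unfolding dotp_def using off by (intro sum.cong) (auto simp: t_def)
    also have "\<dots> = \<alpha> ! ?i0" using k2 by simp
    finally show ?thesis .
  qed
  have "Ssum k1 k2 \<alpha> j = (\<Sum>x\<in>vecs ?n. if fk k1 k2 x = j then w ^ dotp x \<alpha> * w ^ (\<alpha> ! ?i0) else 0)"
    unfolding Ssum_shift[OF tv sel] tJ tb td using fk_lt[of k1 k2] by (simp add: mod_less)
  also have "\<dots> = w ^ (\<alpha> ! ?i0) * Ssum k1 k2 \<alpha> j"
    unfolding Ssum_def sum_distrib_left by (intro sum.cong refl) (simp add: mult.commute)
  finally have "(w ^ (\<alpha> ! ?i0) - 1) * Ssum k1 k2 \<alpha> j = 0" by (simp add: algebra_simps)
  moreover have "w ^ (\<alpha> ! ?i0) \<noteq> 1" using w_ne1 nz a_lt by simp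
  ultimately show ?thesis by simp
qed



definition astar :: "nat \<Rightarrow> nat \<Rightarrow> nat list" where
  "astar k1 k2 = map (\<lambda>i. if i = 0 \<or> i \<in> {10+k1..9+k1+k2} then 1 else (0::nat)) [0..<10+k1+k2]"

lemma astar_vecs: "astar k1 k2 \<in> vecs (10+k1+k2)"
  by (auto simp: astar_def vecs_def dd_def)

lemma astar_nz: "astar k1 k2 \<noteq> zerovec (10+k1+k2)"
proof
  assume "astar k1 k2 = zerovec (10+k1+k2)"
  then have "astar k1 k2 ! 0 = zerovec (10+k1+k2) ! 0" by simp
  then show False by (simp add: astar_def zerovec_def del: upt_Suc)
qed

lemma astar_ham: "hamming (astar k1 k2) = k2 + 1"
proof -
  have "{i. i < length (astar k1 k2) \<and> astar k1 k2 ! i \<noteq> 0} = insert 0 {10+k1..9+k1+k2}"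
    by (auto simp: astar_def split: if_splits)
  then show ?thesis unfolding hamming_def by simp
qed

lemma dotp_astar: assumes "length x = 10+k1+k2"
  shows "dotp x (astar k1 k2) = x!0 + (\<Sum>i=10+k1..9+k1+k2. x!i)"
proof -
  have "dotp x (astar k1 k2) = (\<Sum>i<10+k1+k2. if i \<in> insert 0 {10+k1..9+k1+k2} then x!i else 0)"
    unfolding dotp_def assms by (intro sum.cong refl) (auto simp: astar_def)
  also have "\<dots> = (\<Sum>i\<in>{i\<in>{..<10+k1+k2}. i \<in> insert 0 {10+k1..9+k1+k2}}. x!i)"
    by (rule sum.inter_filter[symmetric]) simp
  also have "{i\<in>{..<10+k1+k2}. i \<in> insert 0 {10+k1..9+k1+k2}} = insert 0 {10+k1..9+k1+k2}" by auto
  also have "(\<Sum>i\<in>insert 0 {10+k1..9+k1+k2}. x!i) = x!0 + (\<Sum>i=10+k1..9+k1+k2. x!i)" by simp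
  finally show ?thesis .
qed

lemma nonzero: assumes j: "j < 10" shows "Ssum k1 k2 (astar k1 k2) j \<noteq> 0"
proof -
  let ?n = "10+k1+k2"
  let ?a = "astar k1 k2"
  define S1 where "S1 = (\<Sum>x\<in>vecs ?n. if fk k1 k2 x = j \<and> J k1 x \<noteq> 0 then w ^ dotp x ?a else 0)"
  define S2 where "S2 = (\<Sum>x\<in>vecs ?n. if fk k1 k2 x = j \<and> J k1 x = 0 then w ^ dotp x ?a else 0)"
  have split: "Ssum k1 k2 ?a j = S1 + S2"
    unfolding Ssum_def S1_def S2_def sum.distrib[symmetric] by (intro sum.cong refl) auto
  define t where "t = map (\<lambda>i. if i = 0 then 1 else (0::nat)) [0..<?n]"
  have tv: "t \<in> vecs ?n" by (auto simp: t_def vecs_def dd_def)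
  have sel: "\<forall>i\<in>{10..9+k1}. t ! i = 0" by (auto simp: t_def)
  have tb: "(\<Sum>i=10+k1..9+k1+k2. t ! i) = 0" by (auto simp: t_def)
  have td: "dotp t ?a = 1"
  proof -
    have "dotp t ?a = (\<Sum>i<?n. if i = 0 then 1 else 0)"
      unfolding dotp_def by (intro sum.cong) (auto simp: t_def astar_def)
    also have "\<dots> = 1" by simp
    finally show ?thesis .
  qed
  have "S1 = (\<Sum>x\<in>vecs ?n. if fk k1 k2 (tr t x) = j \<and> J k1 (tr t x) \<noteq> 0 then w ^ dotp (tr t x) ?a else 0)"
    unfolding S1_def by (rule sum_tr[OF tv, symmetric])
  also have "\<dots> = (\<Sum>x\<in>vecs ?n. w * (if fk k1 k2 x = j \<and> J k1 x \<noteq> 0 then w ^ dotp x ?a else 0))"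
  proof (intro sum.cong refl)
    fix x assume x: "x \<in> vecs ?n"
    have lx: "length x = ?n" using x vecs_len by blast
    have lt: "length t = length x" using tv x vecs_len by metis
    have Jt: "J k1 (tr t x) = J k1 x" by (rule J_tr[OF lx sel])
    have "J k1 x \<noteq> 0 \<Longrightarrow> t ! J k1 x = 0" using J_lt[of k1 x] by (simp add: t_def)
    then have "J k1 x \<noteq> 0 \<Longrightarrow> fk k1 k2 (tr t x) = fk k1 k2 x"
      using fk_tr[OF lx sel] tb fk_lt[of k1 k2 x] by simp
    then show "(if fk k1 k2 (tr t x) = j \<and> J k1 (tr t x) \<noteq> 0 then w ^ dotp (tr t x) ?a else 0) =
       w * (if fk k1 k2 x = j \<and> J k1 x \<noteq> 0 then w ^ dotp x ?a else 0)"
      using Jt w_dotp_tr[OF lt, of ?a] td by (auto simp: mult.commute)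
  qed
  also have "\<dots> = w * S1" unfolding S1_def by (simp add: sum_distrib_left)
  finally have "(w - 1) * S1 = 0" by (simp add: algebra_simps)
  moreover have "w \<noteq> 1" using w_ne1[of 1] by simp
  ultimately have S1: "S1 = 0" by simp
  have "S2 = (\<Sum>x\<in>vecs ?n. if fk k1 k2 x = j \<and> J k1 x = 0 then w ^ j else 0)"
  proof (unfold S2_def, intro sum.cong refl)
    fix x assume x: "x \<in> vecs ?n"
    have lx: "length x = ?n" using x vecs_len by blast
    have "J k1 x = 0 \<Longrightarrow> fk k1 k2 x = dotp x ?a mod 10"
      by (simp add: fk_alt dotp_astar[OF lx])
    then show "(if fk k1 k2 x = j \<and> J k1 x = 0 then w ^ dotp x ?a else 0) =
      (if fk k1 k2 x = j \<and> J k1 x = 0 then w ^ j else 0)"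
      using w_mod[of "dotp x ?a"] by auto
  qed
  also have "\<dots> = w ^ j * of_nat (card {x\<in>vecs ?n. fk k1 k2 x = j \<and> J k1 x = 0})"
    by (simp add: sum.If_cases finite_vecs Int_def mult.commute)
  finally have S2: "S2 = w ^ j * of_nat (card {x\<in>vecs ?n. fk k1 k2 x = j \<and> J k1 x = 0})" .
  define x0 where "x0 = map (\<lambda>i. if i = 0 then j else (0::nat)) [0..<?n]"
  have "x0 \<in> {x\<in>vecs ?n. fk k1 k2 x = j \<and> J k1 x = 0}"
  proof -
    have x0v: "x0 \<in> vecs ?n" using j by (auto simp: x0_def vecs_def dd_def)
    have J0: "J k1 x0 = 0" by (auto simp: J_def x0_def)
    have "(\<Sum>i=10+k1..9+k1+k2. x0 ! i) = 0" by (auto simp: x0_def)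
    then have "fk k1 k2 x0 = j" using J0 j by (simp add: fk_alt x0_def)
    then show ?thesis using x0v J0 by simp
  qed
  moreover have "finite {x\<in>vecs ?n. fk k1 k2 x = j \<and> J k1 x = 0}"
    by (rule finite_subset[OF _ finite_vecs]) auto
  ultimately have "card {x\<in>vecs ?n. fk k1 k2 x = j \<and> J k1 x = 0} \<noteq> 0"
    by (auto simp: card_eq_0_iff)
  then have "S2 \<noteq> 0" unfolding S2 using w_ne0 by simp
  then show ?thesis using split S1 by simp
qed

lemma fourier_Q: assumes "\<alpha> \<in> vecs (10+k1+k2)" "\<alpha> \<noteq> zerovec (10+k1+k2)"
  shows "fourier (10+k1+k2) (Qfj (fk k1 k2) j) \<alpha> = cnj (2 * Ssum k1 k2 \<alpha> j) / 10^(10+k1+k2)"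
proof -
  let ?n = "10+k1+k2"
  have "(\<Sum>y\<in>vecs ?n. of_real (Qfj (fk k1 k2) j y) * chi \<alpha> y)
      = (\<Sum>y\<in>vecs ?n. 2 * (if fk k1 k2 y = j then w ^ dotp y \<alpha> else 0) - w ^ dotp y \<alpha>)"
    by (intro sum.cong refl) (simp add: Qfj_def chi_w)
  also have "\<dots> = 2 * Ssum k1 k2 \<alpha> j - (\<Sum>y\<in>vecs ?n. w ^ dotp y \<alpha>)"
    by (simp add: sum_subtractf Ssum_def sum_distrib_left)
  also have "(\<Sum>y\<in>vecs ?n. w ^ dotp y \<alpha>) = 0" using ortho0[OF assms(1)] assms(2) by simp
  finally have e: "(\<Sum>y\<in>vecs ?n. of_real (Qfj (fk k1 k2) j y) * chi \<alpha> y) = 2 * Ssum k1 k2 \<alpha> j" by simp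
  have "(\<Sum>y\<in>vecs ?n. of_real (Qfj (fk k1 k2) j y) * cnj (chi \<alpha> y))
      = cnj (\<Sum>y\<in>vecs ?n. of_real (Qfj (fk k1 k2) j y) * chi \<alpha> y)"
    by (simp add: cnj_sum)
  then show ?thesis using fourier_eq[OF assms(1)] e by simp
qed



lemma card_blk: "card {10+k1..9+k1+k2} = (k2::nat)" by simp

lemma small_zero:
  assumes \<alpha>: "\<alpha> \<in> vecs (10+k1+k2)" "\<alpha> \<noteq> zerovec (10+k1+k2)"
    and h: "hamming \<alpha> \<le> k2" and k2: "0 < k2" and j: "j < 10"
  shows "Ssum k1 k2 \<alpha> j = 0"
proof (cases "\<exists>i0\<in>{10+k1..9+k1+k2}. \<alpha> ! i0 = 0")
  case True
  then obtain i0 where "i0\<in>{10+k1..9+k1+k2}" "\<alpha> ! i0 = 0" by blast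
  then show ?thesis using caseA[OF \<alpha> _ _ j] by blast
next
  case False
  let ?supp = "{i. i < length \<alpha> \<and> \<alpha> ! i \<noteq> 0}"
  have la: "length \<alpha> = 10+k1+k2" using \<alpha> vecs_len by blast
  have sub: "{10+k1..9+k1+k2} \<subseteq> ?supp" using False la by auto
  have fin: "finite ?supp" by simp
  have "card ?supp \<le> card {10+k1..9+k1+k2}" using h card_blk[of k1 k2] by (simp add: hamming_def)
  moreover have "card {10+k1..9+k1+k2} \<le> card ?supp" by (rule card_mono[OF fin sub])
  ultimately have "{10+k1..9+k1+k2} = ?supp" using card_subset_eq[OF fin sub] by linarith
  then have off: "\<forall>i<10+k1+k2. i \<notin> {10+k1..9+k1+k2} \<longrightarrow> \<alpha> ! i = 0" using la by auto
  have "\<alpha> ! (10+k1) \<noteq> 0" using False k2 by auto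
  then show ?thesis by (rule caseB[OF \<alpha>(1) k2 off])
qed

lemma rQ_eq: assumes k2: "0 < k2" and j: "j < 10"
  shows "rQ (10+k1+k2) (Qfj (fk k1 k2) j) = k2 + 1"
proof -
  let ?n = "10+k1+k2"
  let ?R = "{hamming \<alpha> | \<alpha>. \<alpha> \<in> vecs ?n \<and> \<alpha> \<noteq> zerovec ?n \<and> fourier ?n (Qfj (fk k1 k2) j) \<alpha> \<noteq> 0}"
  have fin: "finite ?R"
    by (rule finite_subset[of _ "hamming ` vecs ?n"]) (auto simp: finite_vecs)
  have four: "fourier ?n (Qfj (fk k1 k2) j) \<alpha> \<noteq> 0 \<longleftrightarrow> Ssum k1 k2 \<alpha> j \<noteq> 0"
    if "\<alpha> \<in> vecs ?n" "\<alpha> \<noteq> zerovec ?n" for \<alpha>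
    using fourier_Q[OF that, of j] by simp
  have f: "fourier ?n (Qfj (fk k1 k2) j) (astar k1 k2) \<noteq> 0"
    using four[OF astar_vecs astar_nz] nonzero[OF j, of k1 k2] by blast
  have "\<exists>\<alpha>. k2 + 1 = hamming \<alpha> \<and> \<alpha> \<in> vecs ?n \<and> \<alpha> \<noteq> zerovec ?n \<and> fourier ?n (Qfj (fk k1 k2) j) \<alpha> \<noteq> 0"
    by (rule exI[of _ "astar k1 k2"]) (simp only: astar_ham astar_vecs astar_nz f simp_thms)
  then have mem: "k2 + 1 \<in> ?R" by simp
  have lb: "k2 + 1 \<le> h" if "h \<in> ?R" for h
  proof -
    obtain \<alpha> where a: "h = hamming \<alpha>" "\<alpha> \<in> vecs ?n" "\<alpha> \<noteq> zerovec ?n"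
      "fourier ?n (Qfj (fk k1 k2) j) \<alpha> \<noteq> 0" using \<open>h \<in> ?R\<close> by blast
    show ?thesis
    proof (rule ccontr)
      assume "\<not> k2 + 1 \<le> h"
      then have "hamming \<alpha> \<le> k2" using a by simp
      then have "Ssum k1 k2 \<alpha> j = 0" using small_zero[OF a(2,3) _ k2 j] by blast
      then show False using four[OF a(2,3)] a(4) by simp
    qed
  qed
  show ?thesis unfolding rQ_def by (rule Min_eqI[OF fin lb mem])
qed

lemma rf_eq: assumes "0 < k2" shows "rf (10+k1+k2) (fk k1 k2) = k2 + 1"
proof -
  have "{rQ (10+k1+k2) (Qfj (fk k1 k2) j) | j. j < dd} = {k2 + 1}"
    using rQ_eq[OF assms] by (auto simp: dd_def intro!: exI[of _ 0])
  then show ?thesis unfolding rf_def by simp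
qed



lemma target_mod: "T < 10 \<Longrightarrow> ((T + 10 - R mod 10) mod 10 + R) mod 10 = (T::nat)"
proof -
  assume T: "T < 10"
  have "((T + 10 - R mod 10) mod 10 + R) mod 10 = ((T + 10 - R mod 10) + R mod 10) mod 10"
    by (simp only: mod_add_left_eq mod_add_right_eq)
  also have "(T + 10 - R mod 10) + R mod 10 = T + 10"
    using mod_less_divisor[of 10 R] by linarith
  finally show ?thesis using T by simp
qed

lemma gf_upper:
  assumes k1: "0 < k1" "k1 \<le> 10"
  shows "\<exists>S (\<alpha>::nat \<Rightarrow> nat) (dh::nat) (a::nat \<Rightarrow> int) (b::int).
      S \<subseteq> {0..<10+k1+k2} \<and> card S = k1 \<and> (\<forall>i\<in>S. \<alpha> i < dd) \<and> 2 \<le> dh \<and> dh \<le> dd \<and>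
      (\<forall>x\<in>vecs (10+k1+k2). (\<forall>i\<in>S. x ! i = \<alpha> i) \<longrightarrow>
         int (fk k1 k2 x) mod int dh = (b + (\<Sum>i\<in>{0..<10+k1+k2} - S. a i * int (x ! i))) mod int dh)"
proof (intro exI conjI)
  let ?S = "{10..9+k1}"
  let ?blk = "{10+k1..9+k1+k2}"
  let ?a = "\<lambda>i. if i \<in> insert 0 ?blk then 1 else (0::int)"
  show "?S \<subseteq> {0..<10+k1+k2}" by auto
  show "card ?S = k1" by simp
  show "\<forall>i\<in>?S. (\<lambda>_. 0::nat) i < dd" by (simp add: dd_def)
  show "2 \<le> (10::nat)" "(10::nat) \<le> dd" by (auto simp: dd_def)
  show "\<forall>x\<in>vecs (10+k1+k2). (\<forall>i\<in>?S. x ! i = 0) \<longrightarrow>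
         int (fk k1 k2 x) mod int 10 = (0 + (\<Sum>i\<in>{0..<10+k1+k2} - ?S. ?a i * int (x ! i))) mod int 10"
  proof (intro ballI impI)
    fix x assume x: "x \<in> vecs (10+k1+k2)" and z: "\<forall>i\<in>?S. x ! i = 0"
    have J0: "J k1 x = 0" using z by (simp add: J_def)
    have "(\<Sum>i\<in>{0..<10+k1+k2} - ?S. ?a i * int (x ! i)) = (\<Sum>i\<in>{0..<10+k1+k2} - ?S. if i \<in> insert 0 ?blk then int (x ! i) else 0)"
      by (intro sum.cong refl) simp
    also have "\<dots> = (\<Sum>i\<in>{i\<in>{0..<10+k1+k2} - ?S. i \<in> insert 0 ?blk}. int (x ! i))"
      by (rule sum.inter_filter[symmetric]) simp
    also have "{i\<in>{0..<10+k1+k2} - ?S. i \<in> insert 0 ?blk} = insert 0 ?blk" by auto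
    also have "(\<Sum>i\<in>insert 0 ?blk. int (x ! i)) = int (x!0 + (\<Sum>i\<in>?blk. x ! i))" by simp
    finally have e: "(\<Sum>i\<in>{0..<10+k1+k2} - ?S. ?a i * int (x ! i)) = int (x!0 + (\<Sum>i\<in>?blk. x ! i))" .
    show "int (fk k1 k2 x) mod int 10 = (0 + (\<Sum>i\<in>{0..<10+k1+k2} - ?S. ?a i * int (x ! i))) mod int 10"
      unfolding e fk_alt J0 by (simp add: zmod_int)
  qed
qed

lemma gf_lower:
  fixes S :: "nat set" and \<alpha> :: "nat \<Rightarrow> nat" and dh :: nat and a :: "nat \<Rightarrow> int" and b :: int
  assumes k1: "k1 \<le> 10"
    and S: "S \<subseteq> {0..<10+k1+k2}" "card S < k1" "\<forall>i\<in>S. \<alpha> i < dd" and dh: "2 \<le> dh"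
    and lin: "\<forall>x\<in>vecs (10+k1+k2). (\<forall>i\<in>S. x ! i = \<alpha> i) \<longrightarrow>
         int (fk k1 k2 x) mod int dh = (b + (\<Sum>i\<in>{0..<10+k1+k2} - S. a i * int (x ! i))) mod int dh"
  shows False
proof -
  let ?n = "10+k1+k2"
  let ?sel = "{10..9+k1}"
  let ?blk = "{10+k1..9+k1+k2}"
  let ?U = "{0..<10+k1+k2} - S"
  have finS: "finite S" using S(1) finite_subset by blast
  obtain s where s: "s \<in> ?sel" "s \<notin> S"
  proof -
    have "\<not> ?sel \<subseteq> S"
    proof
      assume "?sel \<subseteq> S"
      then have "card ?sel \<le> card S" by (rule card_mono[OF finS])
      then show False using S(2) by simp
    qed
    then show ?thesis using that by blast
  qed
  obtain m where m: "m < 10" "m \<notin> S"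
  proof -
    have "\<not> {0..<10} \<subseteq> S"
    proof
      assume "{0..<10} \<subseteq> S"
      then have "card {0..<10::nat} \<le> card S" by (rule card_mono[OF finS])
      then show False using S(2) k1 by simp
    qed
    then obtain m0 where "m0 \<in> {0..<10}" "m0 \<notin> S" by blast
    then show ?thesis using that by simp
  qed
  have sn: "s < ?n" "10 \<le> s" "s \<le> 9 + k1" using s by auto
  have sm: "s \<noteq> m" using sn m by simp
  define base where "base i = (if i \<in> S then \<alpha> i else 0)" for i
  define xv where "xv \<sigma> v = map (\<lambda>i. if i \<in> S then \<alpha> i else if i = s then \<sigma> else if i = m then v else 0) [0..<?n]"
    for \<sigma> v :: nat
  define R where "R = (\<Sum>i\<in>?sel - {s}. base i)"
  define B where "B = (\<Sum>i\<in>?blk. base i)"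
  have xv_nth: "xv \<sigma> v ! i = (if i \<in> S then \<alpha> i else if i = s then \<sigma> else if i = m then v else 0)"
    if "i < ?n" for \<sigma> v i using that by (simp add: xv_def)
  have Jx: "J k1 (xv \<sigma> v) = (\<sigma> + R) mod 10" for \<sigma> v
  proof -
    have "(\<Sum>i\<in>?sel. xv \<sigma> v ! i) = xv \<sigma> v ! s + (\<Sum>i\<in>?sel - {s}. xv \<sigma> v ! i)"
      by (rule sum.remove) (use s in auto)
    also have "(\<Sum>i\<in>?sel - {s}. xv \<sigma> v ! i) = R"
      unfolding R_def using m by (intro sum.cong refl) (auto simp: xv_nth base_def)
    finally show ?thesis using sn s by (simp add: J_def xv_nth)
  qed
  have Bx: "(\<Sum>i\<in>?blk. xv \<sigma> v ! i) = B" for \<sigma> v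
    unfolding B_def using m sn by (intro sum.cong refl) (auto simp: xv_nth base_def)
  have fx: "fk k1 k2 (xv \<sigma> v) = ((if (\<sigma> + R) mod 10 \<in> S then \<alpha> ((\<sigma> + R) mod 10)
        else if (\<sigma> + R) mod 10 = m then v else 0) + B) mod 10" for \<sigma> v
  proof -
    have Jl: "(\<sigma> + R) mod 10 < ?n" "(\<sigma> + R) mod 10 \<noteq> s" using sn by auto
    show ?thesis unfolding fk_alt Jx Bx using Jl by (simp add: xv_nth)
  qed
  have key: "int (fk k1 k2 (xv \<sigma> v)) mod int dh = (b + a s * int \<sigma> + a m * int v) mod int dh"
    if sv: "\<sigma> < 10" "v < 10" for \<sigma> v
  proof -
    have xvV: "xv \<sigma> v \<in> vecs ?n" using sv S(3) by (auto simp: xv_def vecs_def dd_def)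
    have agree: "\<forall>i\<in>S. xv \<sigma> v ! i = \<alpha> i" using S(1) xv_nth by auto
    have "(\<Sum>i\<in>?U. a i * int (xv \<sigma> v ! i)) = (\<Sum>i\<in>?U. (if i = s then a s * int \<sigma> else 0) + (if i = m then a m * int v else 0))"
      using sm by (intro sum.cong refl) (auto simp: xv_nth)
    also have "\<dots> = a s * int \<sigma> + a m * int v"
      using sn s m by (simp add: sum.distrib)
    finally have lsum: "(\<Sum>i\<in>?U. a i * int (xv \<sigma> v ! i)) = a s * int \<sigma> + a m * int v" .
    show ?thesis using lin xvV agree lsum by (simp add: add.assoc)
  qed
  define sig where "sig T = (T + 10 - R mod 10) mod 10" for T
  have sig: "sig T < 10" "(sig T + R) mod 10 = T" if "T < 10" for T
    using target_mod[OF that, of R] by (auto simp: sig_def)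
  define m' where "m' = (if m = 0 then 1 else (0::nat))"
  have m': "m' < 10" "m' \<noteq> m" by (auto simp: m'_def)
  have "fk k1 k2 (xv (sig m') 0) = fk k1 k2 (xv (sig m') 1)"
    unfolding fx sig(2)[OF m'(1)] using m'(2) by simp
  then have "(b + a s * int (sig m') + a m * 0) mod int dh = (b + a s * int (sig m') + a m * 1) mod int dh"
    using key[of "sig m'" 0] key[of "sig m'" 1] sig(1)[OF m'(1)] by simp
  then have "int dh dvd a m" by (simp add: mod_eq_dvd_iff)
  define vv where "vv T = (T + 10 - B mod 10) mod 10" for T
  have vv: "vv T < 10" "(vv T + B) mod 10 = T" if "T < 10" for T
    using target_mod[OF that, of B] by (auto simp: vv_def)
  have f2: "fk k1 k2 (xv (sig m) (vv T)) = T" if "T < 10" for T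
    unfolding fx sig(2)[OF m(1)] using m(2) vv[OF that] by simp
  have c: "(b + a s * int (sig m) + a m * int (vv T)) mod int dh = (b + a s * int (sig m)) mod int dh" for T
    using \<open>int dh dvd a m\<close> by (metis dvd_mult2 mod_add_right_eq mod_0_imp_dvd add_0_right dvd_imp_mod_0 mod_add_eq)
  have "int 0 mod int dh = (b + a s * int (sig m)) mod int dh"
    using key[of "sig m" "vv 0"] sig(1)[OF m(1)] vv(1)[of 0] f2[of 0] c[of 0] by simp
  moreover have "int 1 mod int dh = (b + a s * int (sig m)) mod int dh"
    using key[of "sig m" "vv 1"] sig(1)[OF m(1)] vv(1)[of 1] f2[of 1] c[of 1] by simp
  ultimately have "(1::int) mod int dh = 0" by simp
  then show False using dh by simp
qed


theorem claim1:
  fixes k1 k2 :: nat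
  assumes "0 < k1" and "k1 \<le> 10" and "0 < k2"
  shows "gf (10 + k1 + k2) (fk k1 k2) = k1
       \<and> rf (10 + k1 + k2) (fk k1 k2) = k2 + 1
       \<and> sf (10 + k1 + k2) (fk k1 k2) = min ((real k2 + 1) / 2) (real k1 + 1)"
proof -
  have g: "gf (10 + k1 + k2) (fk k1 k2) = k1"
    unfolding gf_def
  proof (rule Least_equality)
    show "\<exists>S (\<alpha>::nat \<Rightarrow> nat) (dh::nat) (a::nat \<Rightarrow> int) (b::int).
      S \<subseteq> {0..<10+k1+k2} \<and> card S = k1 \<and> (\<forall>i\<in>S. \<alpha> i < dd) \<and> 2 \<le> dh \<and> dh \<le> dd \<and>
      (\<forall>x\<in>vecs (10+k1+k2). (\<forall>i\<in>S. x ! i = \<alpha> i) \<longrightarrow>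
         int (fk k1 k2 x) mod int dh = (b + (\<Sum>i\<in>{0..<10+k1+k2} - S. a i * int (x ! i))) mod int dh)"
      by (rule gf_upper[OF assms(1,2)])
  next
    fix y
    assume "\<exists>S (\<alpha>::nat \<Rightarrow> nat) (dh::nat) (a::nat \<Rightarrow> int) (b::int).
      S \<subseteq> {0..<10+k1+k2} \<and> card S = y \<and> (\<forall>i\<in>S. \<alpha> i < dd) \<and> 2 \<le> dh \<and> dh \<le> dd \<and>
      (\<forall>x\<in>vecs (10+k1+k2). (\<forall>i\<in>S. x ! i = \<alpha> i) \<longrightarrow>
         int (fk k1 k2 x) mod int dh = (b + (\<Sum>i\<in>{0..<10+k1+k2} - S. a i * int (x ! i))) mod int dh)"
    then obtain S and \<alpha> :: "nat \<Rightarrow> nat" and dh :: nat and a :: "nat \<Rightarrow> int" and b :: int where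
      h: "S \<subseteq> {0..<10+k1+k2}" "card S = y" "\<forall>i\<in>S. \<alpha> i < dd" "2 \<le> dh"
      "\<forall>x\<in>vecs (10+k1+k2). (\<forall>i\<in>S. x ! i = \<alpha> i) \<longrightarrow>
         int (fk k1 k2 x) mod int dh = (b + (\<Sum>i\<in>{0..<10+k1+k2} - S. a i * int (x ! i))) mod int dh"
      by blast
    show "k1 \<le> y"
    proof (rule ccontr)
      assume "\<not> k1 \<le> y"
      then have "card S < k1" using h(2) by simp
      then show False using gf_lower[OF assms(2) h(1) _ h(3) h(4) h(5)] by blast
    qed
  qed
  have r: "rf (10 + k1 + k2) (fk k1 k2) = k2 + 1" by (rule rf_eq[OF assms(3)])
  have s: "sf (10 + k1 + k2) (fk k1 k2) = min ((real k2 + 1) / 2) (real k1 + 1)"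
    unfolding sf_def g r by (simp add: add.commute)
  show ?thesis using g r s by blast
qed

end
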